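(* Let $\{|\psi_i\rangle=|\psi_i^A\rangle\otimes|\psi_i^B\rangle\}_{i=1}^r$ be a set of product states in $\mathcal H_A\otimes\mathcal H_B$ (finite-dimensional, all factors nonzero) whose graphs satisfy $G_A=\overline{G_B}$, i.e. for all $i\neq j$, $\langle\psi_i^A|\psi_j^A\rangle=0 \iff \langle\psi_i^B|\psi_j^B\rangle\neq0$. Then the states are perfectly distinguishable both by one-way LOCC with Alice measuring first and by one-way LOCC with Bob measuring first if and only if they are perfectly distinguishable by a product measurement.
   Context: The graph $G_A$ has vertex set $\{1,\dots,r\}$ with an edge $\{u,v\}$ ($u\ne v$) iff $\langle\psi_u^A|\psi_v^A\rangle\ne0$; $G_B$ likewise with Bob's vectors; $\overline{G}$ is the complement graph. One-way LOCC with Alice first: there exist positive semidefinite $Q_1,\dots,Q_N$ on $\mathcal H_A$ with $\sum_jQ_j=I$ and, for each $j$, positive semidefinite $R^{(j)}_1,\dots,R^{(j)}_r$ on $\mathcal H_B$ with $\sum_kR^{(j)}_k=I$, such that $\langle\psi_l|Q_j\otimes R^{(j)}_k|\psi_l\rangle=0$ for all $j$ and $k\ne l$. One-way LOCC with Bob first: the same with the roles of $\mathcal H_A$ and $\mathcal H_B$ exchanged (Bob's measurement first, Alice's measurement depending on Bob's outcome). Perfect distinguishability by a product measurement: there exist positive semidefinite $A_1,\dots,A_p$ on $\mathcal H_A$ summing to $I$ and positive semidefinite $B_1,\dots,B_q$ on $\mathcal H_B$ summing to $I$ such that for every pair $(a,b)$ there is at most one index $k$ with $\langle\psi_k|A_a\otimes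 B_b|\psi_k\rangle\neq0$. *)

theory Defs
  imports "HOL-Analysis.Analysis"
begin

text \<open>Finite-dimensional Hilbert spaces are modelled as complex^'n with 'n a finite type;
  operators as matrices complex^'n^'n acting by *v.\<close>

definition cinner :: "complex^'n \<Rightarrow> complex^'n \<Rightarrow> complex" where
  "cinner x y = (\<Sum>i\<in>UNIV. cnj (x $ i) * y $ i)"

definition psd :: "complex^'n^'n \<Rightarrow> bool" where
  "psd M \<longleftrightarrow> (\<forall>x. Im (cinner x (M *v x)) = 0 \<and> Re (cinner x (M *v x)) \<ge> 0)"

definition expect :: "complex^'n \<Rightarrow> complex^'n^'n \<Rightarrow> complex" where
  "expect x M = cinner x (M *v x)"

definition tensor_vec :: "complex^'a \<Rightarrow> complex^'b \<Rightarrow> complex^('a \<times> 'b)" where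
  "tensor_vec x y = (\<chi> p. x $ fst p * y $ snd p)"

definition tensor_mat :: "complex^'a^'a \<Rightarrow> complex^'b^'b \<Rightarrow> complex^('a \<times> 'b)^('a \<times> 'b)" where
  "tensor_mat M N = (\<chi> p q. M $ fst p $ fst q * N $ snd p $ snd q)"

definition gram_graph :: "nat \<Rightarrow> (nat \<Rightarrow> complex^'n) \<Rightarrow> (nat \<times> nat) set" where
  "gram_graph r v = {(u, w). u < r \<and> w < r \<and> u \<noteq> w \<and> cinner (v u) (v w) \<noteq> 0}"

definition complement_graph :: "nat \<Rightarrow> (nat \<times> nat) set \<Rightarrow> (nat \<times> nat) set" where
  "complement_graph r E = {(u, w). u < r \<and> w < r \<and> u \<noteq> w \<and> (u, w) \<notin> E}"

definition one_way_LOCC_A :: "nat \<Rightarrow> (nat \<Rightarrow> complex^'a) \<Rightarrow> (nat \<Rightarrow> complex^'b) \<Rightarrow> bool" where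
  "one_way_LOCC_A r psiA psiB \<longleftrightarrow>
    (\<exists>(N::nat) (Q::nat \<Rightarrow> complex^'a^'a) (R::nat \<Rightarrow> nat \<Rightarrow> complex^'b^'b).
       (\<forall>j<N. psd (Q j)) \<and> (\<Sum>j<N. Q j) = mat 1 \<and>
       (\<forall>j<N. (\<forall>k<r. psd (R j k)) \<and> (\<Sum>k<r. R j k) = mat 1) \<and>
       (\<forall>j<N. \<forall>k<r. \<forall>l<r. k \<noteq> l \<longrightarrow>
          expect (tensor_vec (psiA l) (psiB l)) (tensor_mat (Q j) (R j k)) = 0))"

definition one_way_LOCC_B :: "nat \<Rightarrow> (nat \<Rightarrow> complex^'a) \<Rightarrow> (nat \<Rightarrow> complex^'b) \<Rightarrow> bool" where
  "one_way_LOCC_B r psiA psiB \<longleftrightarrow>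
    (\<exists>(N::nat) (Q::nat \<Rightarrow> complex^'b^'b) (R::nat \<Rightarrow> nat \<Rightarrow> complex^'a^'a).
       (\<forall>j<N. psd (Q j)) \<and> (\<Sum>j<N. Q j) = mat 1 \<and>
       (\<forall>j<N. (\<forall>k<r. psd (R j k)) \<and> (\<Sum>k<r. R j k) = mat 1) \<and>
       (\<forall>j<N. \<forall>k<r. \<forall>l<r. k \<noteq> l \<longrightarrow>
          expect (tensor_vec (psiA l) (psiB l)) (tensor_mat (R j k) (Q j)) = 0))"

definition product_distinguishable :: "nat \<Rightarrow> (nat \<Rightarrow> complex^'a) \<Rightarrow> (nat \<Rightarrow> complex^'b) \<Rightarrow> bool" where
  "product_distinguishable r psiA psiB \<longleftrightarrow>
    (\<exists>(p::nat) (q::nat) (A::nat \<Rightarrow> complex^'a^'a) (B::nat \<Rightarrow> complex^'b^'b).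
       (\<forall>a<p. psd (A a)) \<and> (\<Sum>a<p. A a) = mat 1 \<and>
       (\<forall>b<q. psd (B b)) \<and> (\<Sum>b<q. B b) = mat 1 \<and>
       (\<forall>a<p. \<forall>b<q. \<forall>k<r. \<forall>l<r.
          expect (tensor_vec (psiA k) (psiB k)) (tensor_mat (A a) (B b)) \<noteq> 0 \<and>
          expect (tensor_vec (psiA l) (psiB l)) (tensor_mat (A a) (B b)) \<noteq> 0 \<longrightarrow> k = l))"

end

theory Submission imports Defs begin
lemma expect_tensor:
  "expect (tensor_vec a b) (tensor_mat Q R) = expect a Q * expect b R"
proof -
  define X where "X i = (\<Sum>j\<in>UNIV. Q $ i $ j * a $ j)" for i
  define Y where "Y k = (\<Sum>l\<in>UNIV. R $ k $ l * b $ l)" for k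
  have inner: "(\<Sum>q\<in>UNIV. tensor_mat Q R $ p $ q * tensor_vec a b $ q) = X (fst p) * Y (snd p)" for p
  proof -
    have "X (fst p) * Y (snd p) = (\<Sum>j\<in>UNIV. \<Sum>l\<in>UNIV. (Q $ fst p $ j * a $ j) * (R $ snd p $ l * b $ l))"
      unfolding X_def Y_def by (rule sum_product)
    also have "\<dots> = (\<Sum>q\<in>UNIV \<times> UNIV. (Q $ fst p $ fst q * a $ fst q) * (R $ snd p $ snd q * b $ snd q))"
      by (subst sum.cartesian_product) (simp add: case_prod_beta)
    also have "\<dots> = (\<Sum>q\<in>UNIV. tensor_mat Q R $ p $ q * tensor_vec a b $ q)"
      unfolding tensor_mat_def tensor_vec_def UNIV_Times_UNIV
      by (intro sum.cong refl) (simp add: ac_simps)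
    finally show ?thesis by simp
  qed
  have "expect (tensor_vec a b) (tensor_mat Q R) = (\<Sum>p\<in>UNIV. cnj (tensor_vec a b $ p) * (X (fst p) * Y (snd p)))"
    unfolding expect_def cinner_def matrix_vector_mult_def using inner by simp
  also have "\<dots> = (\<Sum>p\<in>UNIV \<times> UNIV. (cnj (a $ fst p) * X (fst p)) * (cnj (b $ snd p) * Y (snd p)))"
    unfolding UNIV_Times_UNIV tensor_vec_def by (intro sum.cong refl) (simp add: ac_simps)
  also have "\<dots> = (\<Sum>i\<in>UNIV. \<Sum>k\<in>UNIV. (cnj (a $ i) * X i) * (cnj (b $ k) * Y k))"
    by (subst sum.cartesian_product) (simp add: case_prod_beta)
  also have "\<dots> = (\<Sum>i\<in>UNIV. cnj (a $ i) * X i) * (\<Sum>k\<in>UNIV. cnj (b $ k) * Y k)"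
    by (rule sum_product[symmetric])
  also have "\<dots> = expect a Q * expect b R"
    unfolding expect_def cinner_def matrix_vector_mult_def X_def Y_def by simp
  finally show ?thesis .
qed

lemma cinner_add_left: "cinner (x + c *s y) z = cinner x z + cnj c * cinner y z"
  unfolding cinner_def by (simp add: sum.distrib sum_distrib_left algebra_simps)
lemma mv_add: fixes R :: "complex^'n^'m" shows "R *v (x + c *s y) = R *v x + c *s (R *v y)"
  unfolding matrix_vector_mult_def apply (simp add: vec_eq_iff distrib_left sum.distrib sum_distrib_left)
  by (simp add: ac_simps)
lemma cinner_add_right: "cinner z (x + c *s y) = cinner z x + c * cinner z y"
  unfolding cinner_def by (simp add: sum.distrib sum_distrib_left algebra_simps)

lemma quad_zero:
  fixes c D :: real assumes "D \<ge> 0" and "\<And>e. c * e + e^2 * D \<ge> 0" shows "c = 0"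
proof (rule ccontr)
  assume "c \<noteq> 0"
  define e where "e = -c/(D+1)"
  have "D + 1 \<noteq> 0" using assms(1) by simp
  then have eD: "e * D = - c - e" unfolding e_def by (simp add: field_simps)
  have e0: "e \<noteq> 0" using \<open>c \<noteq> 0\<close> \<open>D + 1 \<noteq> 0\<close> unfolding e_def by simp
  have "e^2 * D = e * (e * D)" by (simp add: power2_eq_square)
  also have "\<dots> = e * (- c - e)" by (simp add: eD)
  finally have "c * e + e^2 * D = c * e + e * (- c - e)" by simp
  also have "\<dots> = - (e * e)" by (simp add: algebra_simps)
  finally have "c * e + e^2 * D = - (e * e)" .
  moreover have "e * e > 0" using e0 by (auto simp: zero_less_mult_iff)
  ultimately show False using assms(2)[of e] by linarith
qed

lemma psd_zero:
  assumes "psd R" and "cinner x (R *v x) = 0"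
  shows "cinner y (R *v x) = 0 \<and> cinner x (R *v y) = 0"
proof -
  define A where "A = cinner x (R *v y)"
  define B where "B = cinner y (R *v x)"
  define D where "D = cinner y (R *v y)"
  have D: "Im D = 0" "Re D \<ge> 0" using assms(1) unfolding psd_def D_def by auto
  have form: "cinner (x + t *s y) (R *v (x + t *s y)) = t * A + cnj t * B + cnj t * t * D" for t
    unfolding mv_add cinner_add_left cinner_add_right A_def B_def D_def using assms(2)
    by (simp add: algebra_simps)
  have P: "Im (t * A + cnj t * B + cnj t * t * D) = 0 \<and> Re (t * A + cnj t * B + cnj t * t * D) \<ge> 0" for t
    using assms(1) unfolding psd_def form[symmetric] by blast
  have i1: "Im A + Im B = 0" using P[of 1] D by simp
  have i2: "Re A - Re B = 0" using P[of \<i>] D by simp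
  have r1: "Re A + Re B = 0"
    apply (rule quad_zero[OF D(2)])
    subgoal for e using P[of "of_real e"] D by (simp add: power2_eq_square algebra_simps)
    done
  have r2: "Im B - Im A = 0"
    apply (rule quad_zero[OF D(2)])
    subgoal for e using P[of "\<i> * of_real e"] D by (simp add: power2_eq_square algebra_simps)
    done
  have "Re A = 0" "Im A = 0" "Re B = 0" "Im B = 0" using i1 i2 r1 r2 by linarith+
  then have "A = 0" "B = 0" by (simp_all add: complex_eq_iff)
  then show ?thesis unfolding A_def B_def by simp
qed
lemma cinner_mv_sum:
  fixes M :: "nat \<Rightarrow> complex^'n^'n"
  assumes "finite S"
  shows "cinner y ((\<Sum>k\<in>S. M k) *v x) = (\<Sum>k\<in>S. cinner y (M k *v x))"
  using assms
proof (induction S rule: finite_induct)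
  case empty
  then show ?case unfolding cinner_def matrix_vector_mult_def by simp
next
  case (insert a S)
  have "cinner y ((M a + (\<Sum>k\<in>S. M k)) *v x) = cinner y (M a *v x) + cinner y ((\<Sum>k\<in>S. M k) *v x)"
    unfolding cinner_def matrix_vector_mult_def
    by (simp add: distrib_left distrib_right sum.distrib)
  then show ?case using insert by simp
qed

lemma expect_sum:
  fixes M :: "nat \<Rightarrow> complex^'n^'n"
  assumes "finite S"
  shows "expect x (\<Sum>k\<in>S. M k) = (\<Sum>k\<in>S. expect x (M k))"
  unfolding expect_def using cinner_mv_sum[OF assms] .

lemma psd_sum:
  fixes M :: "nat \<Rightarrow> complex^'n^'n"
  assumes "finite S" "\<forall>k\<in>S. psd (M k)"
  shows "psd (\<Sum>k\<in>S. M k)"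
  unfolding psd_def
proof
  fix x
  have e: "cinner x ((\<Sum>k\<in>S. M k) *v x) = (\<Sum>k\<in>S. cinner x (M k *v x))"
    by (rule cinner_mv_sum[OF assms(1)])
  have "\<forall>k\<in>S. Im (cinner x (M k *v x)) = 0 \<and> Re (cinner x (M k *v x)) \<ge> 0"
    using assms(2) unfolding psd_def by blast
  then show "Im (cinner x ((\<Sum>k\<in>S. M k) *v x)) = 0 \<and> 0 \<le> Re (cinner x ((\<Sum>k\<in>S. M k) *v x))"
    unfolding e by (simp add: Im_sum Re_sum sum_nonneg)
qed

lemma orth:
  fixes R :: "nat \<Rightarrow> complex^'n^'n"
  assumes "\<forall>k<r. psd (R k)" "(\<Sum>k<r. R k) = mat 1" "l<r" "m<r" "l\<noteq>m"
    "\<forall>k<r. k\<noteq>l \<longrightarrow> expect (x l) (R k) = 0" "\<forall>k<r. k\<noteq>m \<longrightarrow> expect (x m) (R k) = 0"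
  shows "cinner (x m) (x l) = 0"
proof -
  have "cinner (x m) (x l) = cinner (x m) ((\<Sum>k<r. R k) *v x l)"
    using assms(2) by (simp add: matrix_vector_mul_lid)
  also have "\<dots> = (\<Sum>k<r. cinner (x m) (R k *v x l))" by (rule cinner_mv_sum) simp
  also have "\<dots> = 0"
  proof (rule sum.neutral, intro ballI)
    fix k assume k: "k \<in> {..<r}"
    show "cinner (x m) (R k *v x l) = 0"
    proof (cases "k = l")
      case True
      then have "k \<noteq> m" using assms(5) by simp
      then have "cinner (x m) (R k *v x m) = 0" using assms(7) k unfolding expect_def by simp
      then show ?thesis using psd_zero[of "R k" "x m" "x l"] assms(1) k True by simp
    next
      case False
      then have "cinner (x l) (R k *v x l) = 0" using assms(6) k unfolding expect_def by simp
      then show ?thesis using psd_zero[of "R k" "x l" "x m"] assms(1) k by simp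
    qed
  qed
  finally show ?thesis .
qed

theorem theorem2:
  fixes psiA :: "nat \<Rightarrow> complex^'a" and psiB :: "nat \<Rightarrow> complex^'b" and r :: nat
  assumes "r \<ge> 1"
    and "\<forall>i<r. psiA i \<noteq> 0 \<and> psiB i \<noteq> 0"
    and "gram_graph r psiA = complement_graph r (gram_graph r psiB)"
  shows "(one_way_LOCC_A r psiA psiB \<and> one_way_LOCC_B r psiA psiB) \<longleftrightarrow>
         product_distinguishable r psiA psiB"
proof
  assume "one_way_LOCC_A r psiA psiB \<and> one_way_LOCC_B r psiA psiB"
  then have LA: "one_way_LOCC_A r psiA psiB" and LB: "one_way_LOCC_B r psiA psiB" by auto
  obtain N :: nat and Q R where
    A1c: "(\<forall>j<N. psd (Q j)) \<and> ((\<Sum>j<N. Q j) = mat 1) \<and> (\<forall>j<N. (\<forall>k<r. psd (R j k)) \<and> (\<Sum>k<r. R j k) = mat 1) \<and> (\<forall>j<N. \<forall>k<r. \<forall>l<r. k \<noteq> l \<longrightarrow> expect (tensor_vec (psiA l) (psiB l)) (tensor_mat (Q j) (R j k)) = 0)"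
    using LA unfolding one_way_LOCC_A_def by (elim exE) (rule that)
  note A1 = A1c[THEN conjunct1] A1c[THEN conjunct2, THEN conjunct1]
    A1c[THEN conjunct2, THEN conjunct2, THEN conjunct1] A1c[THEN conjunct2, THEN conjunct2, THEN conjunct2]
  obtain N' :: nat and Q' R' where
    B1c: "(\<forall>j<N'. psd (Q' j)) \<and> ((\<Sum>j<N'. Q' j) = mat 1) \<and> (\<forall>j<N'. (\<forall>k<r. psd (R' j k)) \<and> (\<Sum>k<r. R' j k) = mat 1) \<and> (\<forall>j<N'. \<forall>k<r. \<forall>l<r. k \<noteq> l \<longrightarrow> expect (tensor_vec (psiA l) (psiB l)) (tensor_mat (R' j k) (Q' j)) = 0)"
    using LB unfolding one_way_LOCC_B_def by (elim exE) (rule that)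
  note B1 = B1c[THEN conjunct1] B1c[THEN conjunct2, THEN conjunct1]
    B1c[THEN conjunct2, THEN conjunct2, THEN conjunct1] B1c[THEN conjunct2, THEN conjunct2, THEN conjunct2]
  show "product_distinguishable r psiA psiB"
    unfolding product_distinguishable_def
    apply (rule exI[where x=N], rule exI[where x=N'], rule exI[where x=Q], rule exI[where x=Q'])
  proof (intro conjI)
    show "\<forall>a<N. psd (Q a)" "(\<Sum>a<N. Q a) = mat 1" "\<forall>b<N'. psd (Q' b)" "(\<Sum>b<N'. Q' b) = mat 1"
      using A1(1,2) B1(1,2) by auto
    show "\<forall>a<N. \<forall>b<N'. \<forall>k<r. \<forall>l<r.
          expect (tensor_vec (psiA k) (psiB k)) (tensor_mat (Q a) (Q' b)) \<noteq> 0 \<and>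
          expect (tensor_vec (psiA l) (psiB l)) (tensor_mat (Q a) (Q' b)) \<noteq> 0 \<longrightarrow> k = l"
    proof (intro allI impI)
    fix a b k l
    assume ab: "a < N" "b < N'" "k < r" "l < r"
      and nz: "expect (tensor_vec (psiA k) (psiB k)) (tensor_mat (Q a) (Q' b)) \<noteq> 0 \<and>
          expect (tensor_vec (psiA l) (psiB l)) (tensor_mat (Q a) (Q' b)) \<noteq> 0"
    show "k = l"
    proof (rule ccontr)
      assume kl: "k \<noteq> l"
      have e1: "expect (psiA k) (Q a) * expect (psiB k) (Q' b) \<noteq> 0"
           "expect (psiA l) (Q a) * expect (psiB l) (Q' b) \<noteq> 0"
        using nz unfolding expect_tensor by blast+
      have nzA: "expect (psiA k) (Q a) \<noteq> 0" "expect (psiA l) (Q a) \<noteq> 0"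
        and nzB: "expect (psiB k) (Q' b) \<noteq> 0" "expect (psiB l) (Q' b) \<noteq> 0"
        using e1 by auto
      have zB: "\<forall>k'<r. k' \<noteq> m \<longrightarrow> expect (psiB m) (R a k') = 0" if "m < r" "expect (psiA m) (Q a) \<noteq> 0" for m
      proof (intro allI impI)
        fix k' assume k': "k' < r" "k' \<noteq> m"
        have "expect (psiA m) (Q a) * expect (psiB m) (R a k') = 0"
          using A1(4)[rule_format, OF ab(1) k'(1) that(1) k'(2)] unfolding expect_tensor .
        then show "expect (psiB m) (R a k') = 0" using that(2) by simp
      qed
      have zA: "\<forall>k'<r. k' \<noteq> m \<longrightarrow> expect (psiA m) (R' b k') = 0" if "m < r" "expect (psiB m) (Q' b) \<noteq> 0" for m
      proof (intro allI impI)
        fix k' assume k': "k' < r" "k' \<noteq> m"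
        have "expect (psiA m) (R' b k') * expect (psiB m) (Q' b) = 0"
          using B1(4)[rule_format, OF ab(2) k'(1) that(1) k'(2)] unfolding expect_tensor .
        then show "expect (psiA m) (R' b k') = 0" using that(2) by simp
      qed
      have RA: "\<forall>k'<r. psd (R a k')" "(\<Sum>k'<r. R a k') = mat 1" using A1(3)[rule_format, OF ab(1)] by blast+
      have RB: "\<forall>k'<r. psd (R' b k')" "(\<Sum>k'<r. R' b k') = mat 1" using B1(3)[rule_format, OF ab(2)] by blast+
      have oB: "cinner (psiB l) (psiB k) = 0"
        using orth[OF RA ab(3) ab(4) kl zB[OF ab(3) nzA(1)] zB[OF ab(4) nzA(2)]] .
      have oA: "cinner (psiA l) (psiA k) = 0"
        using orth[OF RB ab(3) ab(4) kl zA[OF ab(3) nzB(1)] zA[OF ab(4) nzB(2)]] .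
      have "(l, k) \<notin> gram_graph r psiA" using oA unfolding gram_graph_def by simp
      then have "(l, k) \<notin> complement_graph r (gram_graph r psiB)" using assms(3) by simp
      then have "(l, k) \<in> gram_graph r psiB" using ab kl unfolding complement_graph_def by auto
      then show False using oB unfolding gram_graph_def by simp
    qed
    qed
  qed
next
  assume "product_distinguishable r psiA psiB"
  then obtain p q :: nat and A B where
    P: "\<forall>a<p. psd (A a)" "(\<Sum>a<p. A a) = mat 1" "\<forall>b<q. psd (B b)" "(\<Sum>b<q. B b) = mat 1"
      "\<forall>a<p. \<forall>b<q. \<forall>k<r. \<forall>l<r.
          expect (tensor_vec (psiA k) (psiB k)) (tensor_mat (A a) (B b)) \<noteq> 0 \<and>
          expect (tensor_vec (psiA l) (psiB l)) (tensor_mat (A a) (B b)) \<noteq> 0 \<longrightarrow> k = l"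
    unfolding product_distinguishable_def by (elim exE conjE) (rule that)
  define E where "E a b l = expect (tensor_vec (psiA l) (psiB l)) (tensor_mat (A a) (B b))" for a b l
  define f where "f a b = (if \<exists>k<r. E a b k \<noteq> 0 then SOME k. k < r \<and> E a b k \<noteq> 0 else 0)" for a b
  have f_lt: "f a b < r" for a b
  proof (cases "\<exists>k<r. E a b k \<noteq> 0")
    case True
    then show ?thesis unfolding f_def using someI_ex[OF True] by simp
  next
    case False
    then show ?thesis unfolding f_def if_not_P[OF False] using assms(1) by simp
  qed
  have f_eq: "f a b = l" if "a < p" "b < q" "l < r" "E a b l \<noteq> 0" for a b l
  proof -
    have ex: "\<exists>k. k<r \<and> E a b k \<noteq> 0" using that by blast
    then have "f a b < r \<and> E a b (f a b) \<noteq> 0" unfolding f_def using someI_ex[OF ex] by auto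
    then show ?thesis using P(5)[rule_format, of a b "f a b" l] that unfolding E_def by simp
  qed
  have LA: "one_way_LOCC_A r psiA psiB"
  proof -
    define RR where "RR a k = (\<Sum>b\<in>{b\<in>{..<q}. f a b = k}. B b)" for a k
    have 1: "\<forall>j<p. psd (A j)" "(\<Sum>j<p. A j) = mat 1" using P(1) P(2) by auto
    have 2: "(\<forall>k<r. psd (RR j k)) \<and> (\<Sum>k<r. RR j k) = mat 1" if j: "j < p" for j
    proof
    show "\<forall>k<r. psd (RR j k)" unfolding RR_def using P(3) by (auto intro!: psd_sum)
    have "(\<Sum>k<r. RR j k) = (\<Sum>b<q. B b)" unfolding RR_def
      by (rule sum.group) (auto simp: f_lt)
    then show "(\<Sum>k<r. RR j k) = mat 1" using P(4) by simp
    qed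
    have 3: "expect (tensor_vec (psiA l) (psiB l)) (tensor_mat (A j) (RR j k)) = 0"
      if j: "j < p" and kl: "k < r" "l < r" "k \<noteq> l" for j k l
    proof -
    have "expect (tensor_vec (psiA l) (psiB l)) (tensor_mat (A j) (RR j k))
        = (\<Sum>b\<in>{b\<in>{..<q}. f j b = k}. E j b l)"
      unfolding expect_tensor RR_def E_def by (simp add: expect_sum sum_distrib_left)
    also have "\<dots> = 0"
    proof (rule sum.neutral, intro ballI)
      fix b assume b: "b \<in> {b\<in>{..<q}. f j b = k}"
      show "E j b l = 0"
      proof (rule ccontr)
        assume "E j b l \<noteq> 0"
        then have "f j b = l" using f_eq j b kl by auto
        then show False using b kl by simp
      qed
    qed
    finally show ?thesis .
    qed
    show ?thesis unfolding one_way_LOCC_A_def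
      apply (rule exI[where x=p], rule exI[where x=A], rule exI[where x=RR])
      apply (intro conjI)
      using 1 apply blast
      using 1 apply blast
      using 2 apply blast
      using 3 by blast
  qed
  have LB: "one_way_LOCC_B r psiA psiB"
  proof -
    define RR where "RR b k = (\<Sum>a\<in>{a\<in>{..<p}. f a b = k}. A a)" for b k
    have 1: "\<forall>j<q. psd (B j)" "(\<Sum>j<q. B j) = mat 1" using P(3) P(4) by auto
    have 2: "(\<forall>k<r. psd (RR j k)) \<and> (\<Sum>k<r. RR j k) = mat 1" if j: "j < q" for j
    proof
    show "\<forall>k<r. psd (RR j k)" unfolding RR_def using P(1) by (auto intro!: psd_sum)
    have "(\<Sum>k<r. RR j k) = (\<Sum>a<p. A a)" unfolding RR_def
      by (rule sum.group) (auto simp: f_lt)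
    then show "(\<Sum>k<r. RR j k) = mat 1" using P(2) by simp
    qed
    have 3: "expect (tensor_vec (psiA l) (psiB l)) (tensor_mat (RR j k) (B j)) = 0"
      if j: "j < q" and kl: "k < r" "l < r" "k \<noteq> l" for j k l
    proof -
    have "expect (tensor_vec (psiA l) (psiB l)) (tensor_mat (RR j k) (B j))
        = (\<Sum>a\<in>{a\<in>{..<p}. f a j = k}. E a j l)"
      unfolding expect_tensor RR_def E_def by (simp add: expect_sum sum_distrib_right)
    also have "\<dots> = 0"
    proof (rule sum.neutral, intro ballI)
      fix a assume a: "a \<in> {a\<in>{..<p}. f a j = k}"
      show "E a j l = 0"
      proof (rule ccontr)
        assume "E a j l \<noteq> 0"
        then have "f a j = l" using f_eq j a kl by auto
        then show False using a kl by simp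
      qed
    qed
    finally show ?thesis .
    qed
    show ?thesis unfolding one_way_LOCC_B_def
      apply (rule exI[where x=q], rule exI[where x=B], rule exI[where x=RR])
      apply (intro conjI)
      using 1 apply blast
      using 1 apply blast
      using 2 apply blast
      using 3 by blast
  qed
  show "one_way_LOCC_A r psiA psiB \<and> one_way_LOCC_B r psiA psiB" using LA LB by simp
qed

end
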